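(* Let $\mathfrak{H}$ be a Euclidean space and let $(\mathcal{X},\mathsf{S},\gamma,(\Lambda_{a})_{a\in\mathcal{A}})$ be a spectral decomposition system for $\mathfrak{H}$ such that the set $\{\Lambda_a\}_{a\in\mathcal{A}}$ is closed in $\mathscr{L}(\mathcal{X},\mathfrak{H})$. Let $\varphi\colon\mathcal{X}\to[-\infty,+\infty]$ be $\mathsf{S}$-invariant, let $x,y\in\mathcal{X}$, and let $a\in\mathcal{A}$. Then: (i) $y\in\partial_{\mathsf{F}}\varphi(x)$ if and only if $\Lambda_a y\in\partial_{\mathsf{F}}(\varphi\circ\gamma)(\Lambda_a x)$; (ii) if $y\in\partial_{\mathsf{L}}\varphi(x)$, then $\Lambda_a y\in\partial_{\mathsf{L}}(\varphi\circ\gamma)(\Lambda_a x)$.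
   Context: A Euclidean space is a finite-dimensional real Hilbert space; $\mathscr{L}(\mathcal{X},\mathfrak{H})$ carries the operator-norm topology. A spectral decomposition system for a Euclidean space $\mathfrak{H}$ is a tuple $(\mathcal{X},\mathsf{S},\gamma,(\Lambda_a)_{a\in\mathcal{A}})$ where $\mathcal{X}$ is a Euclidean space, $\mathsf{S}$ is a group acting on $\mathcal{X}$ such that each map $x\mapsto \mathsf{s}\cdot x$ is a linear isometry, $\gamma\colon\mathfrak{H}\to\mathcal{X}$ is a mapping, and each $\Lambda_a\colon\mathcal{X}\to\mathfrak{H}$ is a linear isometry, such that: [A] there exists a mapping $\tau\colon\mathcal{X}\to\mathcal{X}$ with $\tau(\mathsf{s}\cdot x)=\tau(x)$ for all $\mathsf{s},x$, $\tau(x)\in\mathsf{S}\cdot x$ for all $x$, and $\gamma\circ\Lambda_a=\tau$ for all $a\in\mathcal{A}$; [B] for every $X\in\mathfrak{H}$ there exists $a\in\mathcal{A}$ with $X=\Lambda_a\gamma(X)$; [C] $\langle X,Y\rangle\le\langle\gamma(X),\gamma(Y)\rangle$ for all $X,Y\in\mathfrak{H}$. A function $\varphi$ on $\mathcal{X}$ is $\mathsf{S}$-invariant if $\varphi(\mathsf{s}\cdot x)=\varphi(x)$ for all $\mathsf{s},x$. For $f\colon\mathcal{H}\to[-\infty,+\infty]$: $\partial_{\mathsf{F}}f(x)=\{y:\liminf_{z\to x,z\ne x}(f(z)-f(x)-\langle z-x,y\rangle)/\|z-x\|\ge0\}$ if $f(x)\in\mathbb{R}$, $\varnothing$ otherwise;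 $\partial_{\mathsf{L}}f(x)$, for $f(x)\in\mathbb{R}$, is the set of $y$ for which there exist $x_n\to x$ with $f(x_n)\to f(x)$ and $y_n\to y$ with $y_n\in\partial_{\mathsf{F}}f(x_n)$, and is $\varnothing$ if $f(x)\in\{\pm\infty\}$. *)

theory Defs
  imports "HOL-Analysis.Analysis" "HOL-Algebra.Group"
begin

definition lin_isometry :: "('a::real_normed_vector \<Rightarrow> 'b::real_normed_vector) \<Rightarrow> bool" where
  "lin_isometry L \<longleftrightarrow> linear L \<and> (\<forall>x. norm (L x) = norm x)"

definition isometric_group_action ::
  "'g monoid \<Rightarrow> ('g \<Rightarrow> 'x::real_normed_vector \<Rightarrow> 'x) \<Rightarrow> bool" where
  "isometric_group_action G act \<longleftrightarrow>
     group G \<and>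
     (\<forall>x. act \<one>\<^bsub>G\<^esub> x = x) \<and>
     (\<forall>g\<in>carrier G. \<forall>h\<in>carrier G. \<forall>x. act (g \<otimes>\<^bsub>G\<^esub> h) x = act g (act h x)) \<and>
     (\<forall>g\<in>carrier G. lin_isometry (act g))"

definition orbit_of :: "'g monoid \<Rightarrow> ('g \<Rightarrow> 'x \<Rightarrow> 'x) \<Rightarrow> 'x \<Rightarrow> 'x set" where
  "orbit_of G act x = {act g x | g. g \<in> carrier G}"

definition S_invariant :: "'g monoid \<Rightarrow> ('g \<Rightarrow> 'x \<Rightarrow> 'x) \<Rightarrow> ('x \<Rightarrow> 'c) \<Rightarrow> bool" where
  "S_invariant G act f \<longleftrightarrow> (\<forall>g\<in>carrier G. \<forall>x. f (act g x) = f x)"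

definition spectral_decomposition_system ::
  "'g monoid \<Rightarrow> ('g \<Rightarrow> 'x::euclidean_space \<Rightarrow> 'x) \<Rightarrow> ('h::euclidean_space \<Rightarrow> 'x)
     \<Rightarrow> 'a set \<Rightarrow> ('a \<Rightarrow> 'x \<Rightarrow> 'h) \<Rightarrow> bool" where
  "spectral_decomposition_system G act \<gamma> A \<Lambda> \<longleftrightarrow>
     isometric_group_action G act \<and>
     (\<forall>a\<in>A. lin_isometry (\<Lambda> a)) \<and>
     (\<exists>\<tau>. S_invariant G act \<tau> \<and> (\<forall>x. \<tau> x \<in> orbit_of G act x) \<and>
          (\<forall>a\<in>A. \<gamma> \<circ> \<Lambda> a = \<tau>)) \<and>
     (\<forall>X. \<exists>a\<in>A. X = \<Lambda> a (\<gamma> X)) \<and>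
     (\<forall>X Y. inner X Y \<le> inner (\<gamma> X) (\<gamma> Y))"

definition frechet_subdiff :: "('a::real_inner \<Rightarrow> ereal) \<Rightarrow> 'a \<Rightarrow> 'a set" where
  "frechet_subdiff f x =
     (if f x \<in> {\<infinity>, -\<infinity>} then {}
      else {y. Liminf (at x)
                 (\<lambda>z. (f z - f x - ereal (inner (z - x) y)) / ereal (norm (z - x))) \<ge> 0})"

definition limiting_subdiff :: "('a::real_inner \<Rightarrow> ereal) \<Rightarrow> 'a \<Rightarrow> 'a set" where
  "limiting_subdiff f x =
     (if f x \<in> {\<infinity>, -\<infinity>} then {}
      else {y. \<exists>xs ys. xs \<longlonglongrightarrow> x \<and> (\<lambda>n. f (xs n)) \<longlonglongrightarrow> f x \<and> ys \<longlonglongrightarrow> y \<and>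
                     (\<forall>n. ys n \<in> frechet_subdiff f (xs n))})"

end

theory Submission imports Defs begin

lemma fs_iff:
  fixes f :: "'a::real_inner \<Rightarrow> ereal"
  assumes fx: "f x = ereal r"
  shows "y \<in> frechet_subdiff f x \<longleftrightarrow>
    (\<forall>e>0. \<exists>d>0. \<forall>z. z \<noteq> x \<and> dist z x < d \<longrightarrow>
        ereal (r + inner (z - x) y - e * norm (z - x)) \<le> f z)"
proof -
  define Q where "Q z = (f z - f x - ereal (inner (z - x) y)) / ereal (norm (z - x))" for z
  have key: "ereal (-e) < Q z \<longleftrightarrow> ereal (r + inner (z - x) y - e * norm (z - x)) < f z"
    if "z \<noteq> x" for z e
  proof -
    have n: "norm (z - x) > 0" using that by simp
    show ?thesis
    proof (cases "f z")
      case (real w)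
      have "Q z = ereal ((w - r - inner (z - x) y) / norm (z - x))"
        using n by (simp add: Q_def fx real)
      then show ?thesis using n by (simp add: real pos_less_divide_eq algebra_simps)
    next
      case PInf
      then show ?thesis using n by (simp add: Q_def fx)
    next
      case MInf
      then show ?thesis using n by (simp add: Q_def fx divide_ereal_def)
    qed
  qed
  have "y \<in> frechet_subdiff f x \<longleftrightarrow> (\<forall>c<0. eventually (\<lambda>z. c < Q z) (at x))"
    by (simp add: frechet_subdiff_def fx le_Liminf_iff Q_def)
  also have "\<dots> \<longleftrightarrow> (\<forall>e>0. \<exists>d>0. \<forall>z. z \<noteq> x \<and> dist z x < d \<longrightarrow>
        ereal (r + inner (z - x) y - e * norm (z - x)) \<le> f z)"
  proof
    assume H: "\<forall>c<0. eventually (\<lambda>z. c < Q z) (at x)"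
    show "\<forall>e>0. \<exists>d>0. \<forall>z. z \<noteq> x \<and> dist z x < d \<longrightarrow>
        ereal (r + inner (z - x) y - e * norm (z - x)) \<le> f z"
    proof (intro allI impI)
      fix e :: real assume "e > 0"
      then have "eventually (\<lambda>z. ereal (-e) < Q z) (at x)" using H by simp
      then obtain d where "d > 0" and d: "\<forall>z. z \<noteq> x \<and> dist z x < d \<longrightarrow> ereal (-e) < Q z"
        by (auto simp: eventually_at)
      show "\<exists>d>0. \<forall>z. z \<noteq> x \<and> dist z x < d \<longrightarrow>
        ereal (r + inner (z - x) y - e * norm (z - x)) \<le> f z"
        using \<open>d > 0\<close> d key by (meson less_imp_le)
    qed
  next
    assume H: "\<forall>e>0. \<exists>d>0. \<forall>z. z \<noteq> x \<and> dist z x < d \<longrightarrow>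
        ereal (r + inner (z - x) y - e * norm (z - x)) \<le> f z"
    show "\<forall>c<0. eventually (\<lambda>z. c < Q z) (at x)"
    proof (intro allI impI)
      fix c :: ereal assume "c < 0"
      obtain e where e: "e > 0" "c < ereal (-e)"
      proof (cases c)
        case (real c')
        then show ?thesis using \<open>c < 0\<close> that[of "-c'/2"] by auto
      next
        case PInf then show ?thesis using \<open>c < 0\<close> by simp
      next
        case MInf then show ?thesis using that[of 1] by simp
      qed
      obtain d where "d > 0" and d: "\<forall>z. z \<noteq> x \<and> dist z x < d \<longrightarrow>
        ereal (r + inner (z - x) y - (e/2) * norm (z - x)) \<le> f z"
        using H e(1) by (meson half_gt_zero)
      have "c < Q z" if "z \<noteq> x" "dist z x < d" for z
      proof -
        have n: "norm (z - x) > 0" using that by simp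
        have "ereal (r + inner (z - x) y - e * norm (z - x)) < ereal (r + inner (z - x) y - (e/2) * norm (z - x))"
          using n e(1) by simp
        also have "\<dots> \<le> f z" using d that by blast
        finally have "ereal (-e) < Q z" using key that(1) by blast
        then show ?thesis using e(2) by simp
      qed
      then show "eventually (\<lambda>z. c < Q z) (at x)"
        using \<open>d > 0\<close> by (auto simp: eventually_at)
    qed
  qed
  finally show ?thesis .
qed

lemma lin_isometry_inner:
  assumes "lin_isometry L" shows "inner (L u) (L v) = inner u v"
proof -
  have l: "linear L" and n: "\<And>x. norm (L x) = norm x" using assms by (auto simp: lin_isometry_def)
  have "L (u + v) = L u + L v" using l by (simp add: linear_add)
  then have "norm (L u + L v) = norm (u + v)" using n by metis
  then show ?thesis using n by (simp add: dot_norm[of "L u"] dot_norm[of u])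
qed

lemma lin_isometry_diff:
  assumes "lin_isometry L" shows "L u - L v = L (u - v)" "norm (L u - L v) = norm (u - v)"
proof -
  show 1: "L u - L v = L (u - v)" using assms by (simp add: lin_isometry_def linear_diff)
  show "norm (L u - L v) = norm (u - v)" unfolding 1 using assms by (simp add: lin_isometry_def)
qed

lemma forward:
  fixes G :: "'g monoid" and act :: "'g \<Rightarrow> 'x::euclidean_space \<Rightarrow> 'x"
    and \<gamma> :: "'h::euclidean_space \<Rightarrow> 'x" and A :: "'a set" and \<Lambda> :: "'a \<Rightarrow> 'x \<Rightarrow> 'h"
    and \<phi> :: "'x \<Rightarrow> ereal" and x y :: 'x and a :: 'a
  assumes sds: "spectral_decomposition_system G act \<gamma> A \<Lambda>"
    and inv: "S_invariant G act \<phi>"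
    and aA: "a \<in> A"
    and yF: "y \<in> frechet_subdiff \<phi> x"
  shows "\<Lambda> a y \<in> frechet_subdiff (\<phi> \<circ> \<gamma>) (\<Lambda> a x)"
proof -
  have grp: "group G" and act1: "\<And>x. act \<one>\<^bsub>G\<^esub> x = x"
    and actm: "\<And>g h x. g \<in> carrier G \<Longrightarrow> h \<in> carrier G \<Longrightarrow> act (g \<otimes>\<^bsub>G\<^esub> h) x = act g (act h x)"
    and actiso: "\<And>g. g \<in> carrier G \<Longrightarrow> lin_isometry (act g)"
    using sds by (auto simp: spectral_decomposition_system_def isometric_group_action_def)
  have Liso: "\<And>b. b \<in> A \<Longrightarrow> lin_isometry (\<Lambda> b)"
    and B: "\<And>X. \<exists>b\<in>A. X = \<Lambda> b (\<gamma> X)"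
    and C: "\<And>X Y. inner X Y \<le> inner (\<gamma> X) (\<gamma> Y)"
    using sds by (auto simp: spectral_decomposition_system_def)
  obtain \<tau> where tinv: "S_invariant G act \<tau>" and torb: "\<And>x. \<tau> x \<in> orbit_of G act x"
    and gL: "\<And>b. b \<in> A \<Longrightarrow> \<gamma> \<circ> \<Lambda> b = \<tau>"
    using sds by (auto simp: spectral_decomposition_system_def)
  have gLa: "\<And>u. \<gamma> (\<Lambda> a u) = \<tau> u" using gL[OF aA] by (metis comp_apply)
  have phinv: "\<And>g u. g \<in> carrier G \<Longrightarrow> \<phi> (act g u) = \<phi> u" using inv by (auto simp: S_invariant_def)
  have phitau: "\<phi> (\<tau> u) = \<phi> u" for u
    using torb[of u] phinv by (auto simp: orbit_of_def)
  have normg: "norm (\<gamma> U) = norm U" for U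
  proof -
    obtain b where "b \<in> A" "U = \<Lambda> b (\<gamma> U)" using B by blast
    then show ?thesis using Liso by (metis lin_isometry_def)
  qed
  have glip: "norm (\<gamma> U - \<gamma> V) \<le> norm (U - V)" for U V
  proof -
    have "(norm (\<gamma> U - \<gamma> V))\<^sup>2 \<le> (norm (U - V))\<^sup>2"
      using C[of U V] by (simp add: dot_norm_neg[of "\<gamma> U"] dot_norm_neg[of U] normg)
    then show ?thesis by (simp add: power_mono_iff)
  qed
  have actinv: "act (inv\<^bsub>G\<^esub> g) (act g u) = u" if "g \<in> carrier G" for g u
    using actm[of "inv\<^bsub>G\<^esub> g" g u] that grp act1 by (simp add: group.l_inv group.inv_closed)
  have iLa: "lin_isometry (\<Lambda> a)" using Liso aA by blast
  have xfin: "\<phi> x \<noteq> \<infinity> \<and> \<phi> x \<noteq> -\<infinity>" using yF by (auto simp: frechet_subdiff_def split: if_splits)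
  then obtain r where r: "\<phi> x = ereal r" by (cases "\<phi> x") auto
  have fX: "(\<phi> \<circ> \<gamma>) (\<Lambda> a x) = ereal r" using r gLa phitau by simp
  have yH: "\<forall>e>0. \<exists>d>0. \<forall>z. z \<noteq> x \<and> dist z x < d \<longrightarrow>
        ereal (r + inner (z - x) y - e * norm (z - x)) \<le> \<phi> z"
    using yF fs_iff[of \<phi> x r y] r by simp
  show ?thesis
    unfolding fs_iff[where f="\<phi> \<circ> \<gamma>" and x="\<Lambda> a x" and r=r, OF fX]
  proof (intro allI impI)
    fix e :: real assume e: "e > 0"
    define K where "K = 1 / e"
    define M where "M = 1 + 2 * K * norm y"
    have K: "K > 0" using e by (simp add: K_def)
    have M: "M \<ge> 1" using K by (simp add: M_def)
    define \<epsilon> where "\<epsilon> = e / (2 * M)"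
    have \<epsilon>: "\<epsilon> > 0" using e M by (simp add: \<epsilon>_def)
    obtain d where d: "d > 0" and dH: "\<forall>z. z \<noteq> x \<and> dist z x < d \<longrightarrow>
        ereal (r + inner (z - x) y - \<epsilon> * norm (z - x)) \<le> \<phi> z"
      using yH \<epsilon> by blast
    have dH': "ereal (r + inner (z - x) y - \<epsilon> * norm (z - x)) \<le> \<phi> z" if "norm (z - x) < d" for z
      using dH that r by (cases "z = x") (auto simp: dist_norm)
    show "\<exists>d>0. \<forall>Z. Z \<noteq> \<Lambda> a x \<and> dist Z (\<Lambda> a x) < d \<longrightarrow>
        ereal (r + inner (Z - \<Lambda> a x) (\<Lambda> a y) - e * norm (Z - \<Lambda> a x)) \<le> (\<phi> \<circ> \<gamma>) Z"
    proof (intro exI[of _ "d / M"] conjI allI impI)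
      show "d / M > 0" using d M by simp
      fix Z assume Z: "Z \<noteq> \<Lambda> a x \<and> dist Z (\<Lambda> a x) < d / M"
      define X where "X = \<Lambda> a x"
      define Y where "Y = \<Lambda> a y"
      define n where "n = norm (Z - X)"
      have n: "n > 0" "n * M < d" using Z M by (auto simp: n_def X_def dist_norm pos_less_divide_eq)
      define t where "t = K * n"
      have t: "t > 0" using K n by (simp add: t_def)
      obtain s where s: "s \<in> carrier G" "\<tau> (x + t *\<^sub>R y) = act s (x + t *\<^sub>R y)"
        using torb[of "x + t *\<^sub>R y"] by (auto simp: orbit_of_def)
      define z where "z = act (inv\<^bsub>G\<^esub> s) (\<gamma> Z)"
      have sinv: "inv\<^bsub>G\<^esub> s \<in> carrier G" using grp s(1) by (simp add: group.inv_closed)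
      have phiz: "\<phi> z = \<phi> (\<gamma> Z)" using phinv[OF sinv] by (simp add: z_def)
      have isoS: "lin_isometry (act s)" "lin_isometry (act (inv\<^bsub>G\<^esub> s))" using actiso s(1) sinv by auto
      have innS: "inner w (act s u) = inner (act (inv\<^bsub>G\<^esub> s) w) u" for w u
        using lin_isometry_inner[OF isoS(2), of w "act s u"] actinv[OF s(1)] by simp
      have nz: "norm z = norm Z" using isoS(2) normg by (simp add: z_def lin_isometry_def)
      have nx: "norm X = norm x" using iLa by (simp add: X_def lin_isometry_def)
      have XY: "inner X Y = inner x y" using lin_isometry_inner[OF iLa] by (simp add: X_def Y_def)
      have LXY: "\<Lambda> a (x + t *\<^sub>R y) = X + t *\<^sub>R Y"
        using iLa by (simp add: X_def Y_def lin_isometry_def linear_add linear_scale)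
      have c1: "inner Z (X + t *\<^sub>R Y) \<le> inner z (x + t *\<^sub>R y)"
      proof -
        have "inner Z (X + t *\<^sub>R Y) \<le> inner (\<gamma> Z) (\<gamma> (\<Lambda> a (x + t *\<^sub>R y)))"
          using C[of Z "\<Lambda> a (x + t *\<^sub>R y)"] LXY by simp
        also have "\<dots> = inner (\<gamma> Z) (act s (x + t *\<^sub>R y))" using gLa s(2) by simp
        also have "\<dots> = inner z (x + t *\<^sub>R y)" using innS by (simp add: z_def)
        finally show ?thesis .
      qed
      have c2: "inner z x - inner Z X = (n\<^sup>2 - (norm (z - x))\<^sup>2) / 2"
        using dot_norm_neg[of z x] dot_norm_neg[of Z X] nz nx by (simp add: n_def)
      have c3: "t * inner (Z - X) Y \<le> t * inner (z - x) y + n\<^sup>2 / 2"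
      proof -
        have "t * inner (Z - X) Y = inner Z (X + t *\<^sub>R Y) - inner Z X - t * inner x y"
          using XY by (simp add: inner_diff_left inner_add_right right_diff_distrib)
        also have "\<dots> \<le> inner z (x + t *\<^sub>R y) - inner Z X - t * inner x y" using c1 by simp
        also have "\<dots> = t * inner (z - x) y + (inner z x - inner Z X)"
          by (simp add: inner_diff_left inner_add_right algebra_simps)
        also have "\<dots> \<le> t * inner (z - x) y + n\<^sup>2 / 2" using c2 by simp
        finally show ?thesis .
      qed
      have c4: "inner (Z - X) Y \<le> inner (z - x) y + n / (2 * K)"
      proof -
        have "n\<^sup>2 / 2 = t * (n / (2 * K))" using K by (simp add: t_def power2_eq_square)
        then have "t * inner (Z - X) Y \<le> t * (inner (z - x) y + n / (2 * K))"
          using c3 by (simp add: algebra_simps)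
        then show ?thesis using t by simp
      qed
      have tau_lip: "norm (\<tau> u - \<tau> v) \<le> norm (u - v)" for u v
        using glip[of "\<Lambda> a u" "\<Lambda> a v"] gLa lin_isometry_diff[OF iLa] by simp
      have b1: "norm (\<gamma> Z - \<tau> x) \<le> n"
        using glip[of Z X] gLa by (simp add: X_def n_def)
      have b2: "norm (\<tau> x - act s x) \<le> 2 * t * norm y"
      proof -
        have "norm (\<tau> x - \<tau> (x + t *\<^sub>R y)) \<le> t * norm y"
          using tau_lip[of x "x + t *\<^sub>R y"] t by simp
        moreover have "norm (act s (x + t *\<^sub>R y) - act s x) = t * norm y"
          using lin_isometry_diff(2)[OF isoS(1)] t by simp
        ultimately show ?thesis using s(2) norm_triangle_ineq[of "\<tau> x - \<tau> (x + t *\<^sub>R y)" "act s (x + t *\<^sub>R y) - act s x"]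
          by simp
      qed
      have b3: "norm (z - x) = norm (\<gamma> Z - act s x)"
        using lin_isometry_diff(2)[OF isoS(2), of "\<gamma> Z" "act s x"] actinv[OF s(1)] by (simp add: z_def)
      have b4: "norm (z - x) \<le> M * n"
      proof -
        have "norm (\<gamma> Z - act s x) \<le> norm (\<gamma> Z - \<tau> x) + norm (\<tau> x - act s x)"
          using norm_triangle_ineq[of "\<gamma> Z - \<tau> x" "\<tau> x - act s x"] by simp
        then show ?thesis using b1 b2 b3 by (simp add: M_def t_def algebra_simps)
      qed
      have zd: "norm (z - x) < d" using b4 n by (simp add: mult.commute)
      have fin: "r + inner (Z - X) Y - e * n \<le> r + inner (z - x) y - \<epsilon> * norm (z - x)"
      proof -
        have "\<epsilon> * norm (z - x) \<le> \<epsilon> * (M * n)" using b4 \<epsilon> by simp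
        also have "\<dots> = e * n / 2" using M by (simp add: \<epsilon>_def)
        finally have "\<epsilon> * norm (z - x) \<le> e * n / 2" .
        moreover have "n / (2 * K) = e * n / 2" using e by (simp add: K_def)
        ultimately show ?thesis using c4 by simp
      qed
      have "ereal (r + inner (Z - X) Y - e * n) \<le> \<phi> z"
        using dH'[OF zd] fin by (meson ereal_less_eq(3) order_trans)
      then show "ereal (r + inner (Z - \<Lambda> a x) (\<Lambda> a y) - e * norm (Z - \<Lambda> a x)) \<le> (\<phi> \<circ> \<gamma>) Z"
        using phiz by (simp add: X_def Y_def n_def)
    qed
  qed
qed

theorem proposition4p6:
  fixes G :: "'g monoid" and act :: "'g \<Rightarrow> 'x::euclidean_space \<Rightarrow> 'x"
    and \<gamma> :: "'h::euclidean_space \<Rightarrow> 'x" and A :: "'a set" and \<Lambda> :: "'a \<Rightarrow> 'x \<Rightarrow> 'h"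
    and \<phi> :: "'x \<Rightarrow> ereal" and x y :: 'x and a :: 'a
  assumes "spectral_decomposition_system G act \<gamma> A \<Lambda>"
    and "closed {Blinfun (\<Lambda> b) | b. b \<in> A}"
    and "S_invariant G act \<phi>"
    and "a \<in> A"
  shows "(y \<in> frechet_subdiff \<phi> x \<longleftrightarrow> \<Lambda> a y \<in> frechet_subdiff (\<phi> \<circ> \<gamma>) (\<Lambda> a x))
    \<and> (y \<in> limiting_subdiff \<phi> x \<longrightarrow> \<Lambda> a y \<in> limiting_subdiff (\<phi> \<circ> \<gamma>) (\<Lambda> a x))"
proof -
  note sds = assms(1) and inv = assms(3) and aA = assms(4)
  have iLa: "lin_isometry (\<Lambda> a)" using sds aA by (auto simp: spectral_decomposition_system_def)
  obtain \<tau> where torb: "\<And>x. \<tau> x \<in> orbit_of G act x"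
    and gL: "\<And>b. b \<in> A \<Longrightarrow> \<gamma> \<circ> \<Lambda> b = \<tau>"
    using sds unfolding spectral_decomposition_system_def by blast
  have gLa: "\<And>u. \<gamma> (\<Lambda> a u) = \<tau> u" using gL[OF aA] by (metis comp_apply)
  have phinv: "\<And>g u. g \<in> carrier G \<Longrightarrow> \<phi> (act g u) = \<phi> u" using inv by (auto simp: S_invariant_def)
  have phitau: "\<phi> (\<tau> u) = \<phi> u" for u
    using torb[of u] phinv by (auto simp: orbit_of_def)
  have fL: "(\<phi> \<circ> \<gamma>) (\<Lambda> a u) = \<phi> u" for u using gLa phitau by simp
  have bwd: "y \<in> frechet_subdiff \<phi> x" if Y: "\<Lambda> a y \<in> frechet_subdiff (\<phi> \<circ> \<gamma>) (\<Lambda> a x)"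
  proof -
    have "(\<phi> \<circ> \<gamma>) (\<Lambda> a x) \<noteq> \<infinity> \<and> (\<phi> \<circ> \<gamma>) (\<Lambda> a x) \<noteq> -\<infinity>"
      using Y by (auto simp: frechet_subdiff_def split: if_splits)
    then obtain r where r: "\<phi> x = ereal r" using fL[of x] by (cases "\<phi> x") auto
    have fX: "(\<phi> \<circ> \<gamma>) (\<Lambda> a x) = ereal r" using r fL by simp
    have H: "\<forall>e>0. \<exists>d>0. \<forall>Z. Z \<noteq> \<Lambda> a x \<and> dist Z (\<Lambda> a x) < d \<longrightarrow>
        ereal (r + inner (Z - \<Lambda> a x) (\<Lambda> a y) - e * norm (Z - \<Lambda> a x)) \<le> (\<phi> \<circ> \<gamma>) Z"
      using Y unfolding fs_iff[where f="\<phi> \<circ> \<gamma>" and x="\<Lambda> a x" and r=r, OF fX] .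
    show ?thesis unfolding fs_iff[where f=\<phi> and x=x and r=r, OF r]
    proof (intro allI impI)
      fix e :: real assume "e > 0"
      then obtain d where d: "d > 0" and dH: "\<forall>Z. Z \<noteq> \<Lambda> a x \<and> dist Z (\<Lambda> a x) < d \<longrightarrow>
        ereal (r + inner (Z - \<Lambda> a x) (\<Lambda> a y) - e * norm (Z - \<Lambda> a x)) \<le> (\<phi> \<circ> \<gamma>) Z"
        using H by blast
      show "\<exists>d>0. \<forall>z. z \<noteq> x \<and> dist z x < d \<longrightarrow> ereal (r + inner (z - x) y - e * norm (z - x)) \<le> \<phi> z"
      proof (intro exI[of _ d] conjI allI impI)
        show "d > 0" by fact
        fix z assume z: "z \<noteq> x \<and> dist z x < d"
        have eq1: "\<Lambda> a z - \<Lambda> a x = \<Lambda> a (z - x)" and eq2: "norm (\<Lambda> a z - \<Lambda> a x) = norm (z - x)"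
          using lin_isometry_diff[OF iLa] by auto
        have "\<Lambda> a z \<noteq> \<Lambda> a x" using eq2 z by auto
        moreover have "dist (\<Lambda> a z) (\<Lambda> a x) < d" using eq2 z by (simp add: dist_norm)
        ultimately have "ereal (r + inner (\<Lambda> a z - \<Lambda> a x) (\<Lambda> a y) - e * norm (\<Lambda> a z - \<Lambda> a x)) \<le> (\<phi> \<circ> \<gamma>) (\<Lambda> a z)"
          using dH by blast
        then show "ereal (r + inner (z - x) y - e * norm (z - x)) \<le> \<phi> z"
          using eq1 eq2 fL lin_isometry_inner[OF iLa] by simp
      qed
    qed
  qed
  have lim: "\<Lambda> a y \<in> limiting_subdiff (\<phi> \<circ> \<gamma>) (\<Lambda> a x)" if L: "y \<in> limiting_subdiff \<phi> x"
  proof -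
    have fin: "\<phi> x \<notin> {\<infinity>, -\<infinity>}" using L by (auto simp: limiting_subdiff_def split: if_splits)
    obtain xs ys where xs: "xs \<longlonglongrightarrow> x" and fxs: "(\<lambda>n. \<phi> (xs n)) \<longlonglongrightarrow> \<phi> x"
      and ys: "ys \<longlonglongrightarrow> y" and F: "\<forall>n. ys n \<in> frechet_subdiff \<phi> (xs n)"
      using L unfolding limiting_subdiff_def by (simp only: fin if_False mem_Collect_eq) blast
    have bl: "bounded_linear (\<Lambda> a)"
      using iLa by (simp add: lin_isometry_def linear_conv_bounded_linear)
    have t1: "(\<lambda>n. \<Lambda> a (xs n)) \<longlonglongrightarrow> \<Lambda> a x" using bounded_linear.tendsto[OF bl xs] .
    have t2: "(\<lambda>n. \<Lambda> a (ys n)) \<longlonglongrightarrow> \<Lambda> a y" using bounded_linear.tendsto[OF bl ys] .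
    have t3: "(\<lambda>n. (\<phi> \<circ> \<gamma>) (\<Lambda> a (xs n))) \<longlonglongrightarrow> (\<phi> \<circ> \<gamma>) (\<Lambda> a x)"
      using fxs fL by simp
    have F2: "\<forall>n. \<Lambda> a (ys n) \<in> frechet_subdiff (\<phi> \<circ> \<gamma>) (\<Lambda> a (xs n))"
      using F forward[OF sds inv aA] by blast
    have fin2: "(\<phi> \<circ> \<gamma>) (\<Lambda> a x) \<notin> {\<infinity>, -\<infinity>}" using fin fL by simp
    show ?thesis unfolding limiting_subdiff_def using t1 t2 t3 F2
      by (simp only: fin2 if_False mem_Collect_eq) blast
  qed
  show ?thesis using forward[OF sds inv aA] bwd lim by blast
qed

end
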